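(* Let $\alpha\ge4$, let $N_2=\{i_1,\dots,i_v\}$ be a finite set with reals $y'_i\in[\frac{\alpha-1}{\alpha},1)$ and weights $w_i\ge0$ ordered so that $w_{i_1}\le w_{i_2}\le\dots\le w_{i_v}$, and suppose $Y:=\sum_{i\in N_2}y'_i\le v-1$. Run the procedure below producing $\hat y$. Then: (i) the procedure terminates at some $r>1$; (ii) every $\hat y_i$ ($i\in N_2$) satisfies $\hat y_i=1$ or $\frac{\alpha-2}{\alpha}<\hat y_i\le\frac{\alpha-1}{\alpha}$, and $\hat y_i=\frac{\alpha-1}{\alpha}$ or $\hat y_i=1$ for every $i\ne i_1$ (so at most one $i$ has $\frac{\alpha-2}{\alpha}<\hat y_i<\frac{\alpha-1}{\alpha}$); (iii) $\sum_{i\in N_2}\hat y_i=\sum_{i\in N_2}y'_i$; (iv) $\sum_{i\in N_2}(1-\hat y_i)w_i\le\sum_{i\in N_2}(1-y'_i)w_i$.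
   Context: Procedure: initially set $\hat y_i=\frac{\alpha-1}{\alpha}$ for all $i\in N_2$ and $Y'=Y-\sum_{i\in N_2}\hat y_i$. For $r=v,v-1,\dots,1$: if $Y'=0$, terminate; if $Y'>0$ and $Y'+\hat y_{i_r}<1$, set $\hat y_{i_1}\leftarrow\hat y_{i_1}-(1-Y'-\hat y_{i_r})$ and $\hat y_{i_r}\leftarrow1$, and terminate; if $Y'>0$ and $Y'+\hat y_{i_r}\ge1$, set $\hat y_{i_r}\leftarrow1$ and update $Y'\leftarrow Y-\sum_{i\in N_2}\hat y_i$. (In the paper $w_i=d'_ic_{s(i)i}$, but the statement holds for arbitrary nonnegative weights.) *)

theory Defs
  imports Complex_Main
begin

text \<open>N_2 = {i_1,...,i_v} is indexed as {1..v}, i.e. i_r = r.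
  proc Y v r yh runs the loop of the procedure for r, r-1, ..., 1 on the current
  vector yh.  It returns the final vector and Some r if the procedure
  terminates in iteration r, or None if the loop runs out (or the unspecified
  case Y' < 0 is reached).\<close>

fun proc :: "real \<Rightarrow> nat \<Rightarrow> nat \<Rightarrow> (nat \<Rightarrow> real) \<Rightarrow> (nat \<Rightarrow> real) \<times> nat option" where
  "proc Y v 0 yh = (yh, None)"
| "proc Y v (Suc k) yh =
     (let r = Suc k; Yp = Y - (\<Sum>i\<in>{1..v}. yh i) in
      if Yp = 0 then (yh, Some r)
      else if Yp > 0 \<and> Yp + yh r < 1
        then ((yh(1 := yh 1 - (1 - Yp - yh r)))(r := 1), Some r)
      else if Yp > 0 \<and> Yp + yh r \<ge> 1
        then proc Y v k (yh(r := 1))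
      else (yh, None))"

definition run_procedure :: "real \<Rightarrow> nat \<Rightarrow> (nat \<Rightarrow> real) \<Rightarrow> (nat \<Rightarrow> real) \<times> nat option" where
  "run_procedure \<alpha> v y' = proc (\<Sum>i\<in>{1..v}. y' i) v v (\<lambda>i. (\<alpha> - 1) / \<alpha>)"

end

theory Submission
  imports Defs
begin

lemma sum_upd:
  fixes f :: "nat \<Rightarrow> real"
  assumes "finite A" "x \<in> A"
  shows "sum (f(x := c)) A = sum f A - f x + c"
proof -
  have "sum (f(x := c)) A = c + sum (f(x := c)) (A - {x})"
    using sum.remove[OF assms, of "f(x:=c)"] by simp
  also have "sum (f(x := c)) (A - {x}) = sum f (A - {x})"
    by (rule sum.cong) auto
  also have "sum f (A - {x}) = sum f A - f x"
    using sum.remove[OF assms, of f] by simp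
  finally show ?thesis by simp
qed

lemma proc_inv:
  fixes a Y :: real
  assumes a: "3/4 \<le> a" "a < 1"
    and "k \<le> v" "Y \<le> real v - 1"
    and "\<forall>i. 1 \<le> i \<and> i \<le> k \<longrightarrow> yh i = a"
    and "\<forall>i. k < i \<and> i \<le> v \<longrightarrow> yh i = 1"
    and "(\<Sum>i\<in>{1..v}. yh i) = real (v - k) + real k * a"
    and "Y - (\<Sum>i\<in>{1..v}. yh i) \<ge> 0"
    and "proc Y v k yh = (yh', t)"
  shows "\<exists>r. t = Some r \<and> 2 \<le> r \<and> r \<le> k \<and> (\<forall>i. r < i \<and> i \<le> v \<longrightarrow> yh' i = 1)
     \<and> (\<forall>i. 2 \<le> i \<and> i < r \<longrightarrow> yh' i = a) \<and> (yh' r = a \<or> yh' r = 1)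
     \<and> 2*a - 1 < yh' 1 \<and> yh' 1 \<le> a \<and> (\<Sum>i\<in>{1..v}. yh' i) = Y"
  using assms(3-)
proof (induction k arbitrary: yh)
  case 0
  then show ?case by simp
next
  case (Suc k0)
  define r where "r = Suc k0"
  define Yp where "Yp = Y - (\<Sum>i\<in>{1..v}. yh i)"
  have yr: "yh r = a" using Suc.prems(3) unfolding r_def by auto
  have y1: "yh 1 = a" using Suc.prems(3) by auto
  have Yp0: "Yp \<ge> 0" using Suc.prems(6) Yp_def by simp
  have Ypeq: "Yp = Y - (real (v - r) + real r * a)" using Suc.prems(5) Yp_def r_def by simp
  have rv: "r \<le> v" using Suc.prems(1) r_def by simp
  have r2: "r \<ge> 2" if "Yp + a < 1 \<or> Yp = 0"
  proof (rule ccontr)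
    assume "\<not> r \<ge> 2"
    then have "r = 1" using r_def by simp
    then have "Yp = Y - (real v - 1) - a" using Ypeq rv by (simp add: of_nat_diff)
    then show False using Suc.prems(2) Yp0 a by linarith
  qed
  have pr: "proc Y v (Suc k0) yh = (if Yp = 0 then (yh, Some r)
      else if Yp > 0 \<and> Yp + yh r < 1
        then ((yh(1 := yh 1 - (1 - Yp - yh r)))(r := 1), Some r)
      else if Yp > 0 \<and> Yp + yh r \<ge> 1
        then proc Y v k0 (yh(r := 1))
      else (yh, None))"
    by (simp add: Yp_def r_def Let_def)
  consider "Yp = 0" | "Yp > 0" "Yp + a < 1" | "Yp > 0" "Yp + a \<ge> 1" using Yp0 by linarith
  then show ?case
  proof cases
    case 1
    then have "yh' = yh" "t = Some r" using pr Suc.prems(7) by auto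
    then show ?thesis using 1 r2 Suc.prems(3,4) yr y1 a Yp_def unfolding r_def by auto
  next
    case 2
    have r1: "r \<noteq> 1" using r2 2 by auto
    have e: "yh' = (yh(1 := yh 1 - (1 - Yp - yh r)))(r := 1)" "t = Some r"
      using pr Suc.prems(7) 2 yr by auto
    have "(\<Sum>i\<in>{1..v}. yh' i) = (\<Sum>i\<in>{1..v}. yh i) - yh 1 + (yh 1 - (1 - Yp - yh r)) - a + 1"
      unfolding e(1) using rv r2[of] 2 r1
      by (subst sum_upd, simp, simp add: r_def, subst sum_upd, auto simp: yr)
    then have "(\<Sum>i\<in>{1..v}. yh' i) = Y" using yr Yp_def by simp
    moreover have "yh' 1 = a - (1 - Yp - a)" using e r1 y1 yr by simp
    ultimately show ?thesis using e r2 2 r1 Suc.prems(3,4) a unfolding r_def by auto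
  next
    case 3
    have rec: "proc Y v k0 (yh(r := 1)) = (yh', t)" using pr Suc.prems(7) 3 yr by auto
    have s: "(\<Sum>i\<in>{1..v}. (yh(r:=1)) i) = (\<Sum>i\<in>{1..v}. yh i) - a + 1"
      using rv r_def yr by (subst sum_upd) auto
    have "\<exists>r. t = Some r \<and> 2 \<le> r \<and> r \<le> k0 \<and> (\<forall>i. r < i \<and> i \<le> v \<longrightarrow> yh' i = 1)
     \<and> (\<forall>i. 2 \<le> i \<and> i < r \<longrightarrow> yh' i = a) \<and> (yh' r = a \<or> yh' r = 1)
     \<and> 2*a - 1 < yh' 1 \<and> yh' 1 \<le> a \<and> (\<Sum>i\<in>{1..v}. yh' i) = Y"
    proof (rule Suc.IH[OF _ Suc.prems(2) _ _ _ _ rec])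
      show "k0 \<le> v" using Suc.prems(1) by simp
      show "\<forall>i. 1 \<le> i \<and> i \<le> k0 \<longrightarrow> (yh(r := 1)) i = a" using Suc.prems(3) r_def by auto
      show "\<forall>i. k0 < i \<and> i \<le> v \<longrightarrow> (yh(r := 1)) i = 1" using Suc.prems(4) r_def by auto
      show "(\<Sum>i\<in>{1..v}. (yh(r := 1)) i) = real (v - k0) + real k0 * a"
        using s Suc.prems(5) Suc.prems(1) by (simp add: of_nat_diff algebra_simps)
      show "0 \<le> Y - (\<Sum>i\<in>{1..v}. (yh(r := 1)) i)" using s 3 Yp_def by linarith
    qed
    then show ?thesis by auto
  qed
qed


theorem lemma7:
  fixes \<alpha> :: real and v :: nat and y' w :: "nat \<Rightarrow> real"
  assumes "\<alpha> \<ge> 4"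
    and "\<And>i. i \<in> {1..v} \<Longrightarrow> (\<alpha> - 1) / \<alpha> \<le> y' i \<and> y' i < 1"
    and "\<And>i. i \<in> {1..v} \<Longrightarrow> w i \<ge> 0"
    and "\<And>i j. 1 \<le> i \<Longrightarrow> i \<le> j \<Longrightarrow> j \<le> v \<Longrightarrow> w i \<le> w j"
    and "(\<Sum>i\<in>{1..v}. y' i) \<le> real v - 1"
    and "run_procedure \<alpha> v y' = (yh, t)"
  shows "(\<exists>r. t = Some r \<and> r > 1) \<and>
    (\<forall>i\<in>{1..v}. yh i = 1 \<or> ((\<alpha> - 2) / \<alpha> < yh i \<and> yh i \<le> (\<alpha> - 1) / \<alpha>)) \<and>
    (\<forall>i\<in>{1..v}. i \<noteq> 1 \<longrightarrow> yh i = (\<alpha> - 1) / \<alpha> \<or> yh i = 1) \<and>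
    ((\<Sum>i\<in>{1..v}. yh i) = (\<Sum>i\<in>{1..v}. y' i)) \<and>
    ((\<Sum>i\<in>{1..v}. (1 - yh i) * w i) \<le> (\<Sum>i\<in>{1..v}. (1 - y' i) * w i))"
proof -
  define a where "a = (\<alpha> - 1) / \<alpha>"
  define Y where "Y = (\<Sum>i\<in>{1..v}. y' i)"
  have ainv: "a = 1 - 1/\<alpha>" using assms(1) unfolding a_def by (simp add: field_simps)
  have ia: "0 < 1/\<alpha>" "1/\<alpha> \<le> 1/4" using assms(1) by (auto simp: field_simps)
  have a: "3/4 \<le> a" "a < 1" using ainv ia by linarith+
  have a2: "(\<alpha> - 2) / \<alpha> = 2*a - 1" using assms(1) unfolding a_def by (simp add: field_simps)
  have ya: "\<And>i. i \<in> {1..v} \<Longrightarrow> a \<le> y' i \<and> y' i < 1" using assms(2) a_def by auto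
  have "(\<Sum>i\<in>{1..v}. (\<lambda>_. a) i) \<le> Y" unfolding Y_def by (rule sum_mono) (use ya in auto)
  then have Yge: "real v * a \<le> Y" by simp
  have pr: "proc Y v v (\<lambda>_. a) = (yh, t)" using assms(6) unfolding run_procedure_def Y_def a_def by simp
  obtain r where r: "t = Some r" "2 \<le> r" "r \<le> v" "\<forall>i. r < i \<and> i \<le> v \<longrightarrow> yh i = 1"
     "\<forall>i. 2 \<le> i \<and> i < r \<longrightarrow> yh i = a" "yh r = a \<or> yh r = 1"
     "2*a - 1 < yh 1" "yh 1 \<le> a" "(\<Sum>i\<in>{1..v}. yh i) = Y"
    using proc_inv[OF a le_refl _ _ _ _ _ pr] assms(5) Yge unfolding Y_def by auto
  have ii: "\<forall>i\<in>{1..v}. i \<noteq> 1 \<longrightarrow> yh i = a \<or> yh i = 1"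
  proof (intro ballI impI)
    fix i assume i: "i \<in> {1..v}" "i \<noteq> 1"
    show "yh i = a \<or> yh i = 1"
      using r(4,5,6) i by (cases "i < r"; cases "i = r") auto
  qed
  have ii': "\<forall>i\<in>{1..v}. yh i = 1 \<or> (2*a - 1 < yh i \<and> yh i \<le> a)"
  proof
    fix i assume i: "i \<in> {1..v}"
    show "yh i = 1 \<or> (2*a - 1 < yh i \<and> yh i \<le> a)"
    proof (cases "i = 1")
      case True then show ?thesis using r(7,8) by simp
    next
      case False then have "yh i = a \<or> yh i = 1" using ii i by blast
      then show ?thesis using a(2) by linarith
    qed
  qed
  have termw: "(y' i - yh i) * w i \<le> (y' i - yh i) * w r" if i: "i \<in> {1..v}" for i
  proof -
    consider "i < r" | "i = r" | "i > r" by linarith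
    then show ?thesis
    proof cases
      case 1
      have "yh i \<le> a" using r(5,8) 1 i by (cases "i = 1") auto
      then have "0 \<le> y' i - yh i" using ya[OF i] by linarith
      moreover have "w i \<le> w r" using assms(4)[of i r] 1 i r(3) by auto
      ultimately show ?thesis by (simp add: mult_left_mono)
    next
      case 2 then show ?thesis by simp
    next
      case 3
      have "yh i = 1" using r(4) 3 i by auto
      then have "y' i - yh i \<le> 0" using ya[OF i] by linarith
      moreover have "w r \<le> w i" using assms(4)[of r i] 3 i r(2) by auto
      ultimately show ?thesis by (simp add: mult_left_mono_neg)
    qed
  qed
  have "(\<Sum>i\<in>{1..v}. (1 - yh i) * w i) - (\<Sum>i\<in>{1..v}. (1 - y' i) * w i)
      = (\<Sum>i\<in>{1..v}. (y' i - yh i) * w i)"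
    by (simp add: sum_subtractf[symmetric] algebra_simps)
  also have "\<dots> \<le> (\<Sum>i\<in>{1..v}. (y' i - yh i) * w r)" by (rule sum_mono) (use termw in auto)
  also have "\<dots> = (Y - (\<Sum>i\<in>{1..v}. yh i)) * w r"
    by (simp add: sum_distrib_right[symmetric] sum_subtractf Y_def)
  also have "\<dots> = 0" using r(9) by simp
  finally have iv: "(\<Sum>i\<in>{1..v}. (1 - yh i) * w i) \<le> (\<Sum>i\<in>{1..v}. (1 - y' i) * w i)" by simp
  have c1: "\<exists>r. t = Some r \<and> r > 1" using r(1,2) by auto
  have c2: "\<forall>i\<in>{1..v}. yh i = 1 \<or> ((\<alpha> - 2) / \<alpha> < yh i \<and> yh i \<le> (\<alpha> - 1) / \<alpha>)"
    using ii' unfolding a2 a_def .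
  have c3: "\<forall>i\<in>{1..v}. i \<noteq> 1 \<longrightarrow> yh i = (\<alpha> - 1) / \<alpha> \<or> yh i = 1"
    using ii unfolding a_def .
  have c4: "(\<Sum>i\<in>{1..v}. yh i) = (\<Sum>i\<in>{1..v}. y' i)" using r(9) unfolding Y_def .
  show ?thesis using c1 c2 c3 c4 iv by blast
qed

end
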